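(* Let $\mathcal{W}(u,v,w):=\exp\bigl[-(u+v+w)^2-w^2-\tfrac12(u-v)^2\bigr]$ and, for $x',y',z',x,y,z\ge0$, $$\begin{aligned}K_2(x',y',z';x,y,z)={}&[1-e^{-4(x'+y'+z')(x+y+z)}](1-e^{-4z'z})\\&+e^{-4x'x-4y'y}[1-e^{-4z'(x+y+z)}][1-e^{-4(x'+y'+z')z}]\\&-e^{-4x'x}[1-e^{-4(y'+z')(x+y+z)}][1-e^{-4(x'+z')z}]\\&-e^{-4y'y}[1-e^{-4(x'+z')(x+y+z)}][1-e^{-4(y'+z')z}]\\&+e^{-4x'x-4z'(x+z)}[1-e^{-4y'(x+y+z)}](1-e^{-4x'z})\\&+e^{-4y'y-4z'(y+z)}[1-e^{-4x'(x+y+z)}](1-e^{-4y'z}).\end{aligned}$$ Then $K_2(x',y',z';0,0,z)=0$, $\partial_xK_2|_{x=y=0}=\partial_yK_2|_{x=y=0}=0$, and for all $x,y,z\ge0$ $$\frac{\sqrt2}{\pi^{3/2}}\int_{\mathbb{R}_+^3}\mathcal{W}(x-x',y-y',z-z')\,K_2(x',y',z';x,y,z)\,\mathrm{d}x'\mathrm{d}y'\mathrm{d}z'=\operatorname{erf}(x)\operatorname{erf}(y)+\operatorname{erf}(z)\operatorname{erf}(x+y+z)-\operatorname{erf}(x+z)\operatorname{erf}(y+z).$$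
   Context: All lengths are measured in units of the diffusion length $\ell_0=\sqrt{8Dt}$. $\mathcal{W}$ is (up to normalisation) the Gaussian propagator of the two-interval diffusion equation $\partial_tE=2D[\partial_x^2+\partial_y^2+\partial_z^2-\partial_x\partial_z-\partial_y\partial_z]E$, and $K_2$ is the kernel through which the initial two-interval probability enters the two-interval probability of the coagulation-diffusion process; the identity expresses the fact that an initially empty lattice stays empty. *)

theory Defs
  imports "HOL-Analysis.Analysis"
begin

definition erf :: "real \<Rightarrow> real" where
  "erf x = 2 / sqrt pi * (LBINT t=0..x. exp (- (t\<^sup>2)))"

definition W :: "real \<Rightarrow> real \<Rightarrow> real \<Rightarrow> real" where
  "W u v w = exp (- ((u + v + w)\<^sup>2) - w\<^sup>2 - (1/2) * (u - v)\<^sup>2)"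

definition K2 :: "real \<Rightarrow> real \<Rightarrow> real \<Rightarrow> real \<Rightarrow> real \<Rightarrow> real \<Rightarrow> real" where
  "K2 x' y' z' x y z =
      (1 - exp (-4 * (x' + y' + z') * (x + y + z))) * (1 - exp (-4 * z' * z))
    + exp (-4 * x' * x - 4 * y' * y) * (1 - exp (-4 * z' * (x + y + z))) * (1 - exp (-4 * (x' + y' + z') * z))
    - exp (-4 * x' * x) * (1 - exp (-4 * (y' + z') * (x + y + z))) * (1 - exp (-4 * (x' + z') * z))
    - exp (-4 * y' * y) * (1 - exp (-4 * (x' + z') * (x + y + z))) * (1 - exp (-4 * (y' + z') * z))
    + exp (-4 * x' * x - 4 * z' * (x + z)) * (1 - exp (-4 * y' * (x + y + z))) * (1 - exp (-4 * x' * z))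
    + exp (-4 * y' * y - 4 * z' * (y + z)) * (1 - exp (-4 * x' * (x + y + z))) * (1 - exp (-4 * y' * z))"

end

theory Submission
  imports Defs "HOL-Probability.Probability"
begin


lemma lborel3: "(lborel :: (real \<times> real \<times> real) measure) = lborel \<Otimes>\<^sub>M (lborel \<Otimes>\<^sub>M lborel)"
  by (simp add: lborel_prod)

lemma nn3:
  fixes f :: "real \<times> real \<times> real \<Rightarrow> ennreal"
  assumes [measurable]: "f \<in> borel_measurable borel"
  shows "(\<integral>\<^sup>+q. f q \<partial>lborel) = (\<integral>\<^sup>+a. \<integral>\<^sup>+b. \<integral>\<^sup>+c. f (a,b,c) \<partial>lborel \<partial>lborel \<partial>lborel)"
proof -
  have sf: "sigma_finite_measure (lborel \<Otimes>\<^sub>M lborel :: (real \<times> real) measure)"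
    by (simp add: lborel_prod lborel.sigma_finite_measure_axioms)
  have m1: "f \<in> borel_measurable (lborel \<Otimes>\<^sub>M (lborel \<Otimes>\<^sub>M lborel))"
    using assms by (simp add: lborel_prod)
  have "(\<integral>\<^sup>+q. f q \<partial>lborel) = (\<integral>\<^sup>+a. \<integral>\<^sup>+bc. f (a,bc) \<partial>(lborel \<Otimes>\<^sub>M lborel) \<partial>lborel)"
    by (subst lborel3, rule sigma_finite_measure.nn_integral_fst[symmetric, OF sf m1])
  also have "\<dots> = (\<integral>\<^sup>+a. \<integral>\<^sup>+b. \<integral>\<^sup>+c. f (a,b,c) \<partial>lborel \<partial>lborel \<partial>lborel)"
  proof (rule nn_integral_cong)
    fix a :: real
    have m2: "(\<lambda>bc. f (a, bc)) \<in> borel_measurable (lborel \<Otimes>\<^sub>M lborel)"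
      by (simp add: lborel_prod)
    show "(\<integral>\<^sup>+bc. f (a,bc) \<partial>(lborel \<Otimes>\<^sub>M lborel)) = (\<integral>\<^sup>+b. \<integral>\<^sup>+c. f (a,b,c) \<partial>lborel \<partial>lborel)"
      using lborel.nn_integral_fst[OF m2] by simp
  qed
  finally show ?thesis .
qed

lemma int3:
  fixes f :: "real \<times> real \<times> real \<Rightarrow> real"
  assumes f: "integrable lborel f"
  shows "(\<integral>q. f q \<partial>lborel) = (\<integral>a. \<integral>b. \<integral>c. f (a,b,c) \<partial>lborel \<partial>lborel \<partial>lborel)"
proof -
  interpret P2: pair_sigma_finite lborel "lborel \<Otimes>\<^sub>M lborel :: (real \<times> real) measure"
    by (simp add: lborel_prod lborel.sigma_finite_measure_axioms pair_sigma_finite.intro)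
  have f2: "integrable (lborel \<Otimes>\<^sub>M (lborel \<Otimes>\<^sub>M lborel)) f" using f by (simp add: lborel_prod)
  have "(\<integral>q. f q \<partial>lborel) = (\<integral>a. \<integral>bc. f (a,bc) \<partial>(lborel \<Otimes>\<^sub>M lborel) \<partial>lborel)"
    by (subst lborel3, rule P2.integral_fst'[OF f2, symmetric])
  also have "\<dots> = (\<integral>a. \<integral>b. \<integral>c. f (a,b,c) \<partial>lborel \<partial>lborel \<partial>lborel)"
  proof (rule integral_cong_AE)
    show "AE a in lborel. (\<integral>bc. f (a,bc) \<partial>(lborel \<Otimes>\<^sub>M lborel)) = (\<integral>b. \<integral>c. f (a,b,c) \<partial>lborel \<partial>lborel)"
      using P2.AE_integrable_fst'[OF f2]
    proof eventually_elim
      case (elim a)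
      then show ?case using lborel_pair.integral_fst'[of "\<lambda>bc. f (a,bc)"] by simp
    qed
    show "(\<lambda>a. \<integral>bc. f (a,bc) \<partial>(lborel \<Otimes>\<^sub>M lborel)) \<in> borel_measurable lborel"
      using P2.integrable_fst'[OF f2] by auto
    show "(\<lambda>a. \<integral>b. \<integral>c. f (a,b,c) \<partial>lborel \<partial>lborel) \<in> borel_measurable lborel"
    proof -
      have "f \<in> borel_measurable borel" using f by auto
      then show ?thesis by measurable
    qed
  qed
  finally show ?thesis .
qed


lemma gauss_hbi:
  assumes "0 < \<alpha>"
  shows "has_bochner_integral lborel (\<lambda>t. exp (- (\<alpha> * (t - m)\<^sup>2))) (sqrt (pi / \<alpha>))"
proof -
  define \<sigma> where "\<sigma> = sqrt (1 / (2 * \<alpha>))"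
  have s2: "\<sigma>\<^sup>2 = 1 / (2 * \<alpha>)" using assms by (simp add: \<sigma>_def)
  have eq: "exp (- (\<alpha> * (t - m)\<^sup>2)) = sqrt (pi / \<alpha>) * normal_density m \<sigma> t" for t
  proof -
    have h1: "2 * pi * \<sigma>\<^sup>2 = pi / \<alpha>" using s2 by simp
    have h2: "- (t - m)\<^sup>2 / (2 * \<sigma>\<^sup>2) = - (\<alpha> * (t - m)\<^sup>2)" unfolding s2 using assms by (simp add: field_simps)
    have nd: "normal_density m \<sigma> t = exp (- (\<alpha> * (t - m)\<^sup>2)) / sqrt (pi / \<alpha>)"
      unfolding normal_density_def h1 h2 by simp
    have "sqrt (pi / \<alpha>) > 0" using assms by simp
    then show ?thesis unfolding nd using assms by simp
  qed
  have "has_bochner_integral lborel (\<lambda>t. sqrt (pi / \<alpha>) * normal_density m \<sigma> t) (sqrt (pi / \<alpha>) * 1)"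
  proof (intro has_bochner_integral_mult_right)
    have "0 < \<sigma>" using assms by (simp add: \<sigma>_def)
    then show "has_bochner_integral lborel (normal_density m \<sigma>) 1"
      by (simp add: has_bochner_integral_iff integrable_normal_density integral_normal_density)
  qed
  then show ?thesis by (simp add: eq)
qed

lemma gauss_nn:
  assumes "0 < \<alpha>"
  shows "(\<integral>\<^sup>+t. ennreal (exp (- (\<alpha> * (t - m)\<^sup>2))) \<partial>lborel) = ennreal (sqrt (pi / \<alpha>))"
  using gauss_hbi[OF assms, of m]
  by (subst nn_integral_eq_integral) (auto simp: has_bochner_integral_iff)

definition nnpres :: "(real \<times> real \<times> real \<Rightarrow> real \<times> real \<times> real) \<Rightarrow> bool" where
  "nnpres g \<longleftrightarrow> g \<in> borel_measurable borel \<and>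
     (\<forall>f :: real \<times> real \<times> real \<Rightarrow> ennreal. f \<in> borel_measurable borel \<longrightarrow>
        (\<integral>\<^sup>+q. f (g q) \<partial>lborel) = (\<integral>\<^sup>+q. f q \<partial>lborel))"

lemma nnpres_distr:
  assumes "nnpres g" shows "distr lborel borel g = lborel"
proof (rule measure_eqI)
  have g[measurable]: "g \<in> borel_measurable borel" using assms by (simp add: nnpres_def)
  show "sets (distr lborel borel g) = sets lborel" by simp
  fix A assume A: "A \<in> sets (distr lborel borel g)"
  then have A'[measurable]: "A \<in> sets borel" by simp
  have "emeasure (distr lborel borel g) A = emeasure lborel (g -` A \<inter> space lborel)"
    by (rule emeasure_distr) (use A in auto)
  also have "\<dots> = (\<integral>\<^sup>+q. indicator A (g q) \<partial>lborel)"
  proof -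
    have "(\<integral>\<^sup>+q. indicator A (g q) \<partial>lborel) = (\<integral>\<^sup>+q. indicator (g -` A) q \<partial>lborel)"
      by (intro nn_integral_cong) (simp split: split_indicator)
    also have "\<dots> = emeasure lborel (g -` A)"
      using measurable_sets[OF g A'] by (intro nn_integral_indicator) simp
    finally show ?thesis by simp
  qed
  also have "\<dots> = (\<integral>\<^sup>+q. indicator A q \<partial>lborel)"
    using assms by (simp add: nnpres_def)
  also have "\<dots> = emeasure lborel A" by simp
  finally show "emeasure (distr lborel borel g) A = emeasure lborel A" .
qed

lemma nnpres_integral:
  fixes f :: "real \<times> real \<times> real \<Rightarrow> real"
  assumes "nnpres g" "f \<in> borel_measurable borel"
  shows "(\<integral>q. f (g q) \<partial>lborel) = (\<integral>q. f q \<partial>lborel)"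
proof -
  have g[measurable]: "g \<in> borel_measurable borel" using assms by (simp add: nnpres_def)
  have "(\<integral>q. f (g q) \<partial>lborel) = integral\<^sup>L (distr lborel borel g) f"
    by (rule integral_distr[symmetric]) (use assms in auto)
  then show ?thesis using nnpres_distr[OF assms(1)] by simp
qed

lemma nnpres_comp:
  assumes "nnpres g" "nnpres h" shows "nnpres (g \<circ> h)"
  unfolding nnpres_def
proof safe
  have [measurable]: "g \<in> borel_measurable borel" "h \<in> borel_measurable borel"
    using assms by (auto simp: nnpres_def)
  show "g \<circ> h \<in> borel_measurable borel" by measurable
  fix f :: "real \<times> real \<times> real \<Rightarrow> ennreal" assume [measurable]: "f \<in> borel_measurable borel"
  have fg: "f \<circ> g \<in> borel_measurable borel" by measurable
  have "(\<integral>\<^sup>+q. (f \<circ> g) (h q) \<partial>lborel) = (\<integral>\<^sup>+q. (f \<circ> g) q \<partial>lborel)"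
    using assms(2) fg unfolding nnpres_def by blast
  also have "\<dots> = (\<integral>\<^sup>+q. f q \<partial>lborel)"
    using assms(1) \<open>f \<in> borel_measurable borel\<close> unfolding nnpres_def o_def by blast
  finally show "(\<integral>\<^sup>+q. f ((g \<circ> h) q) \<partial>lborel) = (\<integral>\<^sup>+q. f q \<partial>lborel)" by (simp add: o_def)
qed

lemma aff1:
  fixes F :: "real \<Rightarrow> ennreal"
  assumes "\<bar>s\<bar> = 1" "F \<in> borel_measurable borel"
  shows "(\<integral>\<^sup>+x. F (t + s * x) \<partial>lborel) = (\<integral>\<^sup>+x. F x \<partial>lborel)"
  using nn_integral_real_affine[OF assms(2), of s t] assms(1) by auto

lemma nnpres_LT:
  assumes s: "\<bar>s1\<bar> = 1" "\<bar>s2\<bar> = 1" "\<bar>s3\<bar> = 1"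
  shows "nnpres (\<lambda>(a,b,c). (t1 + s1 * a, (t2 + k21 * a) + s2 * b, (t3 + k31 * a + k32 * b) + s3 * c))"
  unfolding nnpres_def
proof safe
  show "(\<lambda>(a,b,c). (t1 + s1 * a, (t2 + k21 * a) + s2 * b, (t3 + k31 * a + k32 * b) + s3 * c)) \<in> borel_measurable borel"
    by (intro borel_measurable_continuous_onI) (simp add: split_beta' case_prod_beta' continuous_intros)
  fix f :: "real \<times> real \<times> real \<Rightarrow> ennreal" assume f[measurable]: "f \<in> borel_measurable borel"
  have f'[measurable]: "f \<in> borel_measurable (borel \<Otimes>\<^sub>M (borel \<Otimes>\<^sub>M borel))" using f by (simp add: borel_prod)
  have gm: "(\<lambda>q. case q of (a,b,c) \<Rightarrow> (t1 + s1 * a, (t2 + k21 * a) + s2 * b, (t3 + k31 * a + k32 * b) + s3 * c)) \<in> borel_measurable (borel :: (real \<times> real \<times> real) measure)"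
    by (intro borel_measurable_continuous_onI) (simp add: split_beta' case_prod_beta' continuous_intros)
  have "(\<integral>\<^sup>+q. f (case q of (a,b,c) \<Rightarrow> (t1 + s1 * a, (t2 + k21 * a) + s2 * b, (t3 + k31 * a + k32 * b) + s3 * c)) \<partial>lborel)
     = (\<integral>\<^sup>+a. \<integral>\<^sup>+b. \<integral>\<^sup>+c. f (t1 + s1 * a, (t2 + k21 * a) + s2 * b, (t3 + k31 * a + k32 * b) + s3 * c) \<partial>lborel \<partial>lborel \<partial>lborel)"
    by (subst nn3) (auto intro: measurable_compose[OF gm f])
  also have "\<dots> = (\<integral>\<^sup>+a. \<integral>\<^sup>+b. \<integral>\<^sup>+c. f (t1 + s1 * a, (t2 + k21 * a) + s2 * b, c) \<partial>lborel \<partial>lborel \<partial>lborel)"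
    by (intro nn_integral_cong aff1[OF s(3)]) measurable
  also have "\<dots> = (\<integral>\<^sup>+a. \<integral>\<^sup>+b. \<integral>\<^sup>+c. f (t1 + s1 * a, b, c) \<partial>lborel \<partial>lborel \<partial>lborel)"
    by (intro nn_integral_cong aff1[OF s(2)]) measurable
  also have "\<dots> = (\<integral>\<^sup>+a. \<integral>\<^sup>+b. \<integral>\<^sup>+c. f (a, b, c) \<partial>lborel \<partial>lborel \<partial>lborel)"
    by (intro aff1[OF s(1)]) measurable
  also have "\<dots> = (\<integral>\<^sup>+q. f q \<partial>lborel)"
    by (rule nn3[symmetric]) measurable
  finally show "(\<integral>\<^sup>+q. f (case q of (a,b,c) \<Rightarrow> (t1 + s1 * a, (t2 + k21 * a) + s2 * b, (t3 + k31 * a + k32 * b) + s3 * c)) \<partial>lborel) = (\<integral>\<^sup>+q. f q \<partial>lborel)" .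
qed

lemma nnpres_rev: "nnpres (\<lambda>(a,b,c). (c,b,a))"
  unfolding nnpres_def
proof safe
  show "(\<lambda>(a,b,c). (c,b,a)) \<in> borel_measurable (borel :: (real \<times> real \<times> real) measure)"
    by (intro borel_measurable_continuous_onI) (simp add: split_beta' case_prod_beta' continuous_intros)
  fix f :: "real \<times> real \<times> real \<Rightarrow> ennreal" assume f[measurable]: "f \<in> borel_measurable borel"
  have f'[measurable]: "f \<in> borel_measurable (borel \<Otimes>\<^sub>M (borel \<Otimes>\<^sub>M borel))" using f by (simp add: borel_prod)
  have gm: "(\<lambda>q. case q of (a,b,c) \<Rightarrow> (c,b,a)) \<in> borel_measurable (borel :: (real \<times> real \<times> real) measure)"
    by (intro borel_measurable_continuous_onI) (simp add: split_beta' case_prod_beta' continuous_intros)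
  have "(\<integral>\<^sup>+q. f (case q of (a,b,c) \<Rightarrow> (c,b,a)) \<partial>lborel)
     = (\<integral>\<^sup>+a. \<integral>\<^sup>+b. \<integral>\<^sup>+c. f (c,b,a) \<partial>lborel \<partial>lborel \<partial>lborel)"
    by (subst nn3) (auto intro: measurable_compose[OF gm f])
  also have "\<dots> = (\<integral>\<^sup>+a. \<integral>\<^sup>+c. \<integral>\<^sup>+b. f (c,b,a) \<partial>lborel \<partial>lborel \<partial>lborel)"
    by (intro nn_integral_cong lborel_pair.Fubini') measurable
  also have "\<dots> = (\<integral>\<^sup>+c. \<integral>\<^sup>+a. \<integral>\<^sup>+b. f (c,b,a) \<partial>lborel \<partial>lborel \<partial>lborel)"
    by (rule lborel_pair.Fubini'[symmetric]) measurable
  also have "\<dots> = (\<integral>\<^sup>+c. \<integral>\<^sup>+b. \<integral>\<^sup>+a. f (c,b,a) \<partial>lborel \<partial>lborel \<partial>lborel)"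
    by (intro nn_integral_cong lborel_pair.Fubini'[symmetric]) measurable
  also have "\<dots> = (\<integral>\<^sup>+q. f q \<partial>lborel)"
    by (rule nn3[symmetric]) measurable
  finally show "(\<integral>\<^sup>+q. f (case q of (a,b,c) \<Rightarrow> (c,b,a)) \<partial>lborel) = (\<integral>\<^sup>+q. f q \<partial>lborel)" .
qed


lemma gauss_nn1: "(\<integral>\<^sup>+t. ennreal (exp (- (t - m)\<^sup>2)) \<partial>lborel) = ennreal (sqrt pi)"
  using gauss_nn[of 1 m] by simp

definition phi :: "real \<times> real \<times> real \<Rightarrow> real" where
  "phi q = W (fst q) (fst (snd q)) (snd (snd q))"

lemma phi_pos: "0 \<le> phi q" by (simp add: phi_def W_def)

lemma cont_W: "continuous_on UNIV (\<lambda>q::real\<times>real\<times>real. W (fst q) (fst (snd q)) (snd (snd q)))"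
  unfolding W_def by (intro continuous_intros)

lemma phi_meas[measurable]: "phi \<in> borel_measurable borel"
  unfolding phi_def by (rule borel_measurable_continuous_onI[OF cont_W])

lemma W_factor: "W (x - a) (y - b) (z - c) =
   exp (- (1 * (a - x)\<^sup>2)) * exp (- (1 * (b - y)\<^sup>2)) * exp (- (2 * (c - (z + (x - a + y - b) / 2))\<^sup>2))"
  unfolding W_def by (simp only: mult_exp_exp, rule arg_cong[where f=exp], simp add: power2_eq_square field_simps)

lemma nn_phi: "(\<integral>\<^sup>+q. ennreal (phi (v - q)) \<partial>lborel) = ennreal (sqrt pi * sqrt pi * sqrt (pi / 2))"
proof -
  obtain x y z where v: "v = (x,y,z)" by (cases v) auto
  have m: "(\<lambda>q. ennreal (phi (v - q))) \<in> borel_measurable borel"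
  proof -
    have "(\<lambda>q. phi (v - q)) \<in> borel_measurable borel"
      by (rule measurable_compose[OF _ phi_meas]) (intro borel_measurable_continuous_onI continuous_intros)
    then show ?thesis by measurable
  qed
  have "(\<integral>\<^sup>+q. ennreal (phi (v - q)) \<partial>lborel) =
     (\<integral>\<^sup>+a. \<integral>\<^sup>+b. \<integral>\<^sup>+c. ennreal (exp (- (1 * (a - x)\<^sup>2))) * ennreal (exp (- (1 * (b - y)\<^sup>2))) *
         ennreal (exp (- (2 * (c - (z + (x - a + y - b) / 2))\<^sup>2))) \<partial>lborel \<partial>lborel \<partial>lborel)"
    by (subst nn3[OF m]) (simp add: v phi_def W_factor ennreal_mult)
  also have "\<dots> = (\<integral>\<^sup>+a. \<integral>\<^sup>+b. ennreal (exp (- (1 * (a - x)\<^sup>2))) * ennreal (exp (- (1 * (b - y)\<^sup>2))) *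
         ennreal (sqrt (pi / 2)) \<partial>lborel \<partial>lborel)"
    by (intro nn_integral_cong, subst nn_integral_cmult) (simp_all add: gauss_nn gauss_nn1)
  also have "\<dots> = (\<integral>\<^sup>+a. ennreal (exp (- (1 * (a - x)\<^sup>2))) * ennreal (sqrt (pi / 1)) *
         ennreal (sqrt (pi / 2)) \<partial>lborel)"
  proof (intro nn_integral_cong)
    fix a
    have "(\<integral>\<^sup>+b. ennreal (exp (- (1 * (a - x)\<^sup>2))) * ennreal (exp (- (1 * (b - y)\<^sup>2))) * ennreal (sqrt (pi / 2)) \<partial>lborel)
      = (\<integral>\<^sup>+b. (ennreal (exp (- (1 * (a - x)\<^sup>2))) * ennreal (sqrt (pi / 2))) * ennreal (exp (- (1 * (b - y)\<^sup>2))) \<partial>lborel)"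
      by (simp add: ac_simps)
    also have "\<dots> = ennreal (exp (- (1 * (a - x)\<^sup>2))) * ennreal (sqrt (pi / 2)) * ennreal (sqrt (pi / 1))"
      by (subst nn_integral_cmult) (simp_all add: gauss_nn gauss_nn1)
    finally show "(\<integral>\<^sup>+b. ennreal (exp (- (1 * (a - x)\<^sup>2))) * ennreal (exp (- (1 * (b - y)\<^sup>2))) * ennreal (sqrt (pi / 2)) \<partial>lborel)
      = ennreal (exp (- (1 * (a - x)\<^sup>2))) * ennreal (sqrt (pi / 1)) * ennreal (sqrt (pi / 2))" by (simp add: ac_simps)
  qed
  also have "\<dots> = (\<integral>\<^sup>+a. ennreal (exp (- (1 * (a - x)\<^sup>2))) \<partial>lborel) * ennreal (sqrt (pi / 1) * sqrt (pi / 2))"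
    by (subst nn_integral_multc[symmetric]) (simp_all add: ennreal_mult mult.assoc)
  also have "\<dots> = ennreal (sqrt pi * sqrt pi * sqrt (pi / 2))"
    by (simp add: gauss_nn gauss_nn1 ennreal_mult[symmetric] mult.assoc)
  finally show ?thesis .
qed

lemma meas_phi_shift[measurable]: "(\<lambda>q. phi (v - q)) \<in> borel_measurable borel"
  by (rule measurable_compose[OF _ phi_meas]) (intro borel_measurable_continuous_onI continuous_intros)

lemma int_phi: "integrable lborel (\<lambda>q. phi (v - q))"
proof (rule integrableI_nonneg)
  show "(\<lambda>q. phi (v - q)) \<in> borel_measurable lborel"
    by simp
  show "AE q in lborel. 0 \<le> phi (v - q)" by (simp add: phi_pos)
  show "(\<integral>\<^sup>+q. ennreal (phi (v - q)) \<partial>lborel) < \<infinity>" by (simp add: nn_phi)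
qed


definition rx :: "real \<times> real \<times> real \<Rightarrow> real \<times> real \<times> real" where "rx = (\<lambda>(a,b,c). (-a, b, a + c))"
definition ry :: "real \<times> real \<times> real \<Rightarrow> real \<times> real \<times> real" where "ry = (\<lambda>(a,b,c). (a, -b, b + c))"
definition rz :: "real \<times> real \<times> real \<Rightarrow> real \<times> real \<times> real" where "rz = (\<lambda>(a,b,c). (a + c, b + c, -c))"

definition Good :: "(real \<times> real \<times> real \<Rightarrow> real \<times> real \<times> real) \<Rightarrow> bool" where
  "Good g \<longleftrightarrow> nnpres g \<and> (\<forall>u v. g (u - v) = g u - g v) \<and> (\<forall>v. phi (g v) = phi v)"

lemma Good_comp:
  assumes "Good g" "Good h" shows "Good (g \<circ> h)"
proof -
  have g: "nnpres g" "\<And>u v. g (u - v) = g u - g v" "\<And>v. phi (g v) = phi v"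
    using assms(1) unfolding Good_def by blast+
  have h: "nnpres h" "\<And>u v. h (u - v) = h u - h v" "\<And>v. phi (h v) = phi v"
    using assms(2) unfolding Good_def by blast+
  show ?thesis unfolding Good_def
    using nnpres_comp[OF g(1) h(1)] by (simp add: g(2,3) h(2,3))
qed

lemma Good_rx: "Good rx"
proof -
  have eq: "rx = (\<lambda>(a,b,c). (0 + (-1) * a, (0 + 0 * a) + 1 * b, (0 + 1 * a + 0 * b) + 1 * c))"
    by (auto simp: rx_def fun_eq_iff)
  have "nnpres rx" by (subst eq) (rule nnpres_LT, simp_all)
  moreover have "\<forall>u v. rx (u - v) = rx u - rx v" by (auto simp: rx_def)
  moreover have "\<forall>v. phi (rx v) = phi v"
    by (auto simp: rx_def phi_def W_def power2_eq_square field_simps)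
  ultimately show ?thesis by (simp add: Good_def)
qed

lemma Good_ry: "Good ry"
proof -
  have eq: "ry = (\<lambda>(a,b,c). (0 + 1 * a, (0 + 0 * a) + (-1) * b, (0 + 0 * a + 1 * b) + 1 * c))"
    by (auto simp: ry_def fun_eq_iff)
  have "nnpres ry" by (subst eq) (rule nnpres_LT, simp_all)
  moreover have "\<forall>u v. ry (u - v) = ry u - ry v" by (auto simp: ry_def)
  moreover have "\<forall>v. phi (ry v) = phi v"
    by (auto simp: ry_def phi_def W_def power2_eq_square field_simps)
  ultimately show ?thesis by (simp add: Good_def)
qed

lemma Good_rz: "Good rz"
proof -
  have L: "nnpres (\<lambda>(a,b,c). (0 + (-1) * a, (0 + 1 * a) + 1 * b, (0 + 1 * a + 0 * b) + 1 * c))"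
    by (rule nnpres_LT) simp_all
  have eq: "rz = (\<lambda>(a,b,c). (c,b,a)) \<circ> (\<lambda>(a,b,c). (0 + (-1) * a, (0 + 1 * a) + 1 * b, (0 + 1 * a + 0 * b) + 1 * c)) \<circ> (\<lambda>(a,b,c). (c,b,a))"
    by (auto simp: rz_def fun_eq_iff)
  have "nnpres rz" by (subst eq) (intro nnpres_comp nnpres_rev L)
  moreover have "\<forall>u v. rz (u - v) = rz u - rz v" by (auto simp: rz_def)
  moreover have "\<forall>v. phi (rz v) = phi v"
    by (auto simp: rz_def phi_def W_def power2_eq_square field_simps)
  ultimately show ?thesis by (simp add: Good_def)
qed

definition Oct :: "(real \<times> real \<times> real) set" where "Oct = {0..} \<times> {0..} \<times> {0..}"

lemma Oct_meas[measurable]: "Oct \<in> sets borel"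
  unfolding Oct_def by (intro borel_closed closed_Times closed_atLeast)

lemma cov:
  assumes "Good g"
  shows "(\<integral>p. indicator Oct p * phi (g X - p) \<partial>lborel) = (\<integral>q. indicator Oct (g q) * phi (X - q) \<partial>lborel)"
proof -
  have np: "nnpres g" and lin: "\<And>u v. g (u - v) = g u - g v" and ph: "\<And>v. phi (g v) = phi v"
    using assms by (auto simp: Good_def)
  have "(\<integral>q. indicator Oct (g q) * phi (X - q) \<partial>lborel) = (\<integral>q. indicator Oct (g q) * phi (g X - g q) \<partial>lborel)"
    by (simp add: lin[symmetric] ph)
  also have "\<dots> = (\<integral>p. indicator Oct p * phi (g X - p) \<partial>lborel)"
    by (rule nnpres_integral[OF np, of "\<lambda>p. indicator Oct p * phi (g X - p)"]) measurable
  finally show ?thesis by simp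
qed


lemma gauss_int: fixes m :: real shows "integrable lborel (\<lambda>t. exp (- ((t - m)\<^sup>2)))"
  using gauss_hbi[of 1 m] by (simp add: has_bochner_integral_iff)

lemma gauss_int0: "integrable lborel (\<lambda>t::real. exp (- (t\<^sup>2)))"
  using gauss_int[of 0] by simp

definition Tl :: "real \<Rightarrow> real" where "Tl a = (\<integral>s. indicator {a<..} s * exp (- (s\<^sup>2)) \<partial>lborel)"

lemma tail1': "Tl (- x) = (\<integral>t. indicator {0<..} t * exp (- ((t - x)\<^sup>2)) \<partial>lborel)"
  unfolding Tl_def
  apply (subst lborel_integral_real_affine[where c=1 and t="-x"])
   apply simp
  apply simp
  apply (rule Bochner_Integration.integral_cong)
   apply (auto split: split_indicator simp: algebra_simps)
  done

lemma tail2': "Tl x = (\<integral>t. indicator {..<0} t * exp (- ((t - x)\<^sup>2)) \<partial>lborel)"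
  unfolding Tl_def
  apply (subst lborel_integral_real_affine[where c="-1" and t="x"])
   apply simp
  apply simp
  apply (rule Bochner_Integration.integral_cong)
   apply (auto split: split_indicator simp: power2_commute algebra_simps)
  done

lemmas tail1 = tail1'[symmetric]
lemmas tail2 = tail2'[symmetric]

lemma Tl_interval: "Tl a = (LBINT s=ereal a..\<infinity>. exp (- (s\<^sup>2)))"
  unfolding Tl_def interval_integral_to_infinity_eq set_lebesgue_integral_def by (simp add: mult.commute)

lemma gauss_interval_int: "interval_lebesgue_integrable lborel (ereal a) \<infinity> (\<lambda>s. exp (- (s\<^sup>2)))"
  unfolding interval_integrable_to_infinity_eq set_integrable_def
  using integrable_mult_indicator[OF _ gauss_int0, of "{a<..}"] by simp

lemma sgn_int: "(\<integral>t. exp (- ((t - x)\<^sup>2)) * sgn t \<partial>lborel) = sqrt pi * erf x"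
proof -
  have i1: "integrable lborel (\<lambda>t. indicator {0<..} t * exp (- ((t - x)\<^sup>2)))"
    using integrable_mult_indicator[OF _ gauss_int, of "{0<..}"] by simp
  have i2: "integrable lborel (\<lambda>t. indicator {..<0} t * exp (- ((t - x)\<^sup>2)))"
    using integrable_mult_indicator[OF _ gauss_int, of "{..<0}"] by simp
  have "(\<integral>t. exp (- ((t - x)\<^sup>2)) * sgn t \<partial>lborel)
     = (\<integral>t. indicator {0<..} t * exp (- ((t - x)\<^sup>2)) - indicator {..<0} t * exp (- ((t - x)\<^sup>2)) \<partial>lborel)"
    by (intro Bochner_Integration.integral_cong) (auto split: split_indicator simp: sgn_if)
  also have "\<dots> = Tl (-x) - Tl x"
    by (simp add: Bochner_Integration.integral_diff[OF i1 i2] tail1 tail2)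
  also have "\<dots> = (LBINT s=ereal (-x)..ereal x. exp (- (s\<^sup>2)))"
  proof -
    have "(LBINT s=ereal (-x)..ereal x. exp (- (s\<^sup>2))) + (LBINT s=ereal x..\<infinity>. exp (- (s\<^sup>2)))
        = (LBINT s=ereal (-x)..\<infinity>. exp (- (s\<^sup>2)))"
    proof (rule interval_integral_sum)
      have "min (ereal (-x)) (min (ereal x) \<infinity>) = ereal (min (-x) x)" by (simp add: min_def)
      moreover have "max (ereal (-x)) (max (ereal x) \<infinity>) = \<infinity>" by simp
      ultimately show "interval_lebesgue_integrable lborel (min (ereal (-x)) (min (ereal x) \<infinity>)) (max (ereal (-x)) (max (ereal x) \<infinity>)) (\<lambda>s. exp (- (s\<^sup>2)))"
        using gauss_interval_int[of "min (-x) x"] by simp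
    qed
    then show ?thesis by (simp add: Tl_interval)
  qed
  also have "\<dots> = (LBINT s=ereal (-x)..0. exp (- (s\<^sup>2))) + (LBINT s=0..ereal x. exp (- (s\<^sup>2)))"
  proof (rule interval_integral_sum[symmetric])
    have e1: "min (ereal (- x)) (min 0 (ereal x)) = ereal (min (-x) (min 0 x))" by (auto simp: min_def zero_ereal_def)
    have e2: "max (ereal (- x)) (max 0 (ereal x)) = ereal (max (-x) (max 0 x))" by (auto simp: max_def zero_ereal_def)
    show "interval_lebesgue_integrable lborel (min (ereal (- x)) (min 0 (ereal x))) (max (ereal (- x)) (max 0 (ereal x))) (\<lambda>s. exp (- (s\<^sup>2)))"
      unfolding e1 e2 by (intro interval_integrable_isCont continuous_intros)
  qed
  also have "(LBINT s=ereal (-x)..0. exp (- (s\<^sup>2))) = (LBINT s=0..ereal x. exp (- (s\<^sup>2)))"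
    by (subst interval_integral_reflect) (simp add: zero_ereal_def)
  finally show ?thesis by (simp add: erf_def zero_ereal_def)
qed


lemma gauss_integral: "0 < \<alpha> \<Longrightarrow> (\<integral>t. exp (- (\<alpha> * (t - m)\<^sup>2)) \<partial>lborel) = sqrt (pi / \<alpha>)"
  using gauss_hbi[of \<alpha> m] by (simp add: has_bochner_integral_iff)

lemma meas_c1[measurable]: "(\<lambda>q::real\<times>real\<times>real. fst q) \<in> borel_measurable borel"
  by (intro borel_measurable_continuous_onI continuous_intros)
lemma meas_c2[measurable]: "(\<lambda>q::real\<times>real\<times>real. fst (snd q)) \<in> borel_measurable borel"
  by (intro borel_measurable_continuous_onI continuous_intros)
lemma meas_c3[measurable]: "(\<lambda>q::real\<times>real\<times>real. snd (snd q)) \<in> borel_measurable borel"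
  by (intro borel_measurable_continuous_onI continuous_intros)

lemma base:
  "(\<integral>q. phi (v - q) * (sgn (fst q) * sgn (fst (snd q))) \<partial>lborel)
     = sqrt pi * sqrt pi * sqrt (pi / 2) * erf (fst v) * erf (fst (snd v))"
proof -
  obtain x y z where v: "v = (x,y,z)" by (cases v) auto
  have int: "integrable lborel (\<lambda>q. phi (v - q) * (sgn (fst q) * sgn (fst (snd q))))"
  proof (rule Bochner_Integration.integrable_bound[OF int_phi[of v]])
    show "(\<lambda>q. phi (v - q) * (sgn (fst q) * sgn (fst (snd q)))) \<in> borel_measurable lborel" by measurable
    show "AE q in lborel. norm (phi (v - q) * (sgn (fst q) * sgn (fst (snd q)))) \<le> norm (phi (v - q))"
      by (auto simp: abs_mult sgn_if phi_pos)
  qed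
  have "(\<integral>q. phi (v - q) * (sgn (fst q) * sgn (fst (snd q))) \<partial>lborel)
     = (\<integral>a. \<integral>b. \<integral>c. (exp (- ((a - x)\<^sup>2)) * sgn a) * (exp (- ((b - y)\<^sup>2)) * sgn b) *
           exp (- (2 * (c - (z + (x - a + y - b) / 2))\<^sup>2)) \<partial>lborel \<partial>lborel \<partial>lborel)"
    by (subst int3[OF int]) (simp add: v phi_def W_factor mult_ac)
  also have "\<dots> = (\<integral>a. \<integral>b. (exp (- ((a - x)\<^sup>2)) * sgn a * sqrt (pi / 2)) * (exp (- ((b - y)\<^sup>2)) * sgn b) \<partial>lborel \<partial>lborel)"
    by (intro Bochner_Integration.integral_cong refl) (simp add: gauss_integral mult_ac)
  also have "\<dots> = (\<integral>a. (exp (- ((a - x)\<^sup>2)) * sgn a) * (sqrt (pi / 2) * (sqrt pi * erf y)) \<partial>lborel)"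
    by (intro Bochner_Integration.integral_cong refl) (simp only: Bochner_Integration.integral_mult_right_zero sgn_int)
  also have "\<dots> = sqrt pi * erf x * (sqrt (pi / 2) * (sqrt pi * erf y))"
    by (simp add: sgn_int)
  finally show ?thesis by (simp add: v mult_ac)
qed


definition GL :: "(real \<times> (real \<times> real \<times> real \<Rightarrow> real \<times> real \<times> real)) list" where
  "GL = [(1, \<lambda>(a,b,c). (a, b, c)),
    (-1, \<lambda>(a,b,c). (- b - c, - a - c, c)),
    (-1, \<lambda>(a,b,c). (a + c, b + c, - c)),
    (1, \<lambda>(a,b,c). (- b, - a, - c)),
    (1, \<lambda>(a,b,c). (- a, - b, a + b + c)),
    (-1, \<lambda>(a,b,c). (b + c, a + c, - a - b - c)),
    (-1, \<lambda>(a,b,c). (- a - c, - b - c, a + b + c)),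
    (1, \<lambda>(a,b,c). (b, a, - a - b - c)),
    (-1, \<lambda>(a,b,c). (- a, b, a + c)),
    (1, \<lambda>(a,b,c). (b + c, - a - c, - b)),
    (1, \<lambda>(a,b,c). (- a - c, b + c, a)),
    (-1, \<lambda>(a,b,c). (b, - a, - b - c)),
    (-1, \<lambda>(a,b,c). (a, - b, b + c)),
    (1, \<lambda>(a,b,c). (- b - c, a + c, - a)),
    (1, \<lambda>(a,b,c). (a + c, - b - c, b)),
    (-1, \<lambda>(a,b,c). (- b, a, - a - c)),
    (1, \<lambda>(a,b,c). (c, a + b + c, - a - c)),
    (-1, \<lambda>(a,b,c). (c, - a - b - c, b)),
    (-1, \<lambda>(a,b,c). (- c, a + b + c, - a)),
    (1, \<lambda>(a,b,c). (- c, - a - b - c, b + c)),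
    (1, \<lambda>(a,b,c). (a + b + c, c, - b - c)),
    (-1, \<lambda>(a,b,c). (- a - b - c, c, a)),
    (-1, \<lambda>(a,b,c). (a + b + c, - c, - b)),
    (1, \<lambda>(a,b,c). (- a - b - c, - c, a + c))]"

lemma Good_GL0: "Good (\<lambda>(a,b,c). (a, b, c))"
proof -
  have eq: "(\<lambda>(a,b,c). (a, b, c)) = rx \<circ> rx" by (auto simp: fun_eq_iff rx_def ry_def rz_def)
  show ?thesis by (subst eq) (intro Good_comp Good_rx Good_ry Good_rz)
qed
lemma Good_GL1: "Good (\<lambda>(a,b,c). (- b - c, - a - c, c))"
proof -
  have eq: "(\<lambda>(a,b,c). (- b - c, - a - c, c)) = rx \<circ> ry \<circ> rz \<circ> rx \<circ> ry" by (auto simp: fun_eq_iff rx_def ry_def rz_def)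
  show ?thesis by (subst eq) (intro Good_comp Good_rx Good_ry Good_rz)
qed
lemma Good_GL2: "Good (\<lambda>(a,b,c). (a + c, b + c, - c))"
proof -
  have eq: "(\<lambda>(a,b,c). (a + c, b + c, - c)) = rz" by (auto simp: fun_eq_iff rx_def ry_def rz_def)
  show ?thesis by (subst eq) (intro Good_comp Good_rx Good_ry Good_rz)
qed
lemma Good_GL3: "Good (\<lambda>(a,b,c). (- b, - a, - c))"
proof -
  have eq: "(\<lambda>(a,b,c). (- b, - a, - c)) = rx \<circ> ry \<circ> rz \<circ> rx \<circ> ry \<circ> rz" by (auto simp: fun_eq_iff rx_def ry_def rz_def)
  show ?thesis by (subst eq) (intro Good_comp Good_rx Good_ry Good_rz)
qed
lemma Good_GL4: "Good (\<lambda>(a,b,c). (- a, - b, a + b + c))"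
proof -
  have eq: "(\<lambda>(a,b,c). (- a, - b, a + b + c)) = rx \<circ> ry" by (auto simp: fun_eq_iff rx_def ry_def rz_def)
  show ?thesis by (subst eq) (intro Good_comp Good_rx Good_ry Good_rz)
qed
lemma Good_GL5: "Good (\<lambda>(a,b,c). (b + c, a + c, - a - b - c))"
proof -
  have eq: "(\<lambda>(a,b,c). (b + c, a + c, - a - b - c)) = rz \<circ> rx \<circ> ry" by (auto simp: fun_eq_iff rx_def ry_def rz_def)
  show ?thesis by (subst eq) (intro Good_comp Good_rx Good_ry Good_rz)
qed
lemma Good_GL6: "Good (\<lambda>(a,b,c). (- a - c, - b - c, a + b + c))"
proof -
  have eq: "(\<lambda>(a,b,c). (- a - c, - b - c, a + b + c)) = rx \<circ> ry \<circ> rz" by (auto simp: fun_eq_iff rx_def ry_def rz_def)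
  show ?thesis by (subst eq) (intro Good_comp Good_rx Good_ry Good_rz)
qed
lemma Good_GL7: "Good (\<lambda>(a,b,c). (b, a, - a - b - c))"
proof -
  have eq: "(\<lambda>(a,b,c). (b, a, - a - b - c)) = rz \<circ> rx \<circ> ry \<circ> rz" by (auto simp: fun_eq_iff rx_def ry_def rz_def)
  show ?thesis by (subst eq) (intro Good_comp Good_rx Good_ry Good_rz)
qed
lemma Good_GL8: "Good (\<lambda>(a,b,c). (- a, b, a + c))"
proof -
  have eq: "(\<lambda>(a,b,c). (- a, b, a + c)) = rx" by (auto simp: fun_eq_iff rx_def ry_def rz_def)
  show ?thesis by (subst eq) (intro Good_comp Good_rx Good_ry Good_rz)
qed
lemma Good_GL9: "Good (\<lambda>(a,b,c). (b + c, - a - c, - b))"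
proof -
  have eq: "(\<lambda>(a,b,c). (b + c, - a - c, - b)) = ry \<circ> rz \<circ> rx \<circ> ry" by (auto simp: fun_eq_iff rx_def ry_def rz_def)
  show ?thesis by (subst eq) (intro Good_comp Good_rx Good_ry Good_rz)
qed
lemma Good_GL10: "Good (\<lambda>(a,b,c). (- a - c, b + c, a))"
proof -
  have eq: "(\<lambda>(a,b,c). (- a - c, b + c, a)) = rx \<circ> rz" by (auto simp: fun_eq_iff rx_def ry_def rz_def)
  show ?thesis by (subst eq) (intro Good_comp Good_rx Good_ry Good_rz)
qed
lemma Good_GL11: "Good (\<lambda>(a,b,c). (b, - a, - b - c))"
proof -
  have eq: "(\<lambda>(a,b,c). (b, - a, - b - c)) = ry \<circ> rz \<circ> rx \<circ> ry \<circ> rz" by (auto simp: fun_eq_iff rx_def ry_def rz_def)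
  show ?thesis by (subst eq) (intro Good_comp Good_rx Good_ry Good_rz)
qed
lemma Good_GL12: "Good (\<lambda>(a,b,c). (a, - b, b + c))"
proof -
  have eq: "(\<lambda>(a,b,c). (a, - b, b + c)) = ry" by (auto simp: fun_eq_iff rx_def ry_def rz_def)
  show ?thesis by (subst eq) (intro Good_comp Good_rx Good_ry Good_rz)
qed
lemma Good_GL13: "Good (\<lambda>(a,b,c). (- b - c, a + c, - a))"
proof -
  have eq: "(\<lambda>(a,b,c). (- b - c, a + c, - a)) = rx \<circ> rz \<circ> rx \<circ> ry" by (auto simp: fun_eq_iff rx_def ry_def rz_def)
  show ?thesis by (subst eq) (intro Good_comp Good_rx Good_ry Good_rz)
qed
lemma Good_GL14: "Good (\<lambda>(a,b,c). (a + c, - b - c, b))"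
proof -
  have eq: "(\<lambda>(a,b,c). (a + c, - b - c, b)) = ry \<circ> rz" by (auto simp: fun_eq_iff rx_def ry_def rz_def)
  show ?thesis by (subst eq) (intro Good_comp Good_rx Good_ry Good_rz)
qed
lemma Good_GL15: "Good (\<lambda>(a,b,c). (- b, a, - a - c))"
proof -
  have eq: "(\<lambda>(a,b,c). (- b, a, - a - c)) = rx \<circ> rz \<circ> rx \<circ> ry \<circ> rz" by (auto simp: fun_eq_iff rx_def ry_def rz_def)
  show ?thesis by (subst eq) (intro Good_comp Good_rx Good_ry Good_rz)
qed
lemma Good_GL16: "Good (\<lambda>(a,b,c). (c, a + b + c, - a - c))"
proof -
  have eq: "(\<lambda>(a,b,c). (c, a + b + c, - a - c)) = rz \<circ> rx" by (auto simp: fun_eq_iff rx_def ry_def rz_def)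
  show ?thesis by (subst eq) (intro Good_comp Good_rx Good_ry Good_rz)
qed
lemma Good_GL17: "Good (\<lambda>(a,b,c). (c, - a - b - c, b))"
proof -
  have eq: "(\<lambda>(a,b,c). (c, - a - b - c, b)) = ry \<circ> rz \<circ> rx" by (auto simp: fun_eq_iff rx_def ry_def rz_def)
  show ?thesis by (subst eq) (intro Good_comp Good_rx Good_ry Good_rz)
qed
lemma Good_GL18: "Good (\<lambda>(a,b,c). (- c, a + b + c, - a))"
proof -
  have eq: "(\<lambda>(a,b,c). (- c, a + b + c, - a)) = rx \<circ> rz \<circ> rx" by (auto simp: fun_eq_iff rx_def ry_def rz_def)
  show ?thesis by (subst eq) (intro Good_comp Good_rx Good_ry Good_rz)
qed
lemma Good_GL19: "Good (\<lambda>(a,b,c). (- c, - a - b - c, b + c))"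
proof -
  have eq: "(\<lambda>(a,b,c). (- c, - a - b - c, b + c)) = rx \<circ> ry \<circ> rz \<circ> rx" by (auto simp: fun_eq_iff rx_def ry_def rz_def)
  show ?thesis by (subst eq) (intro Good_comp Good_rx Good_ry Good_rz)
qed
lemma Good_GL20: "Good (\<lambda>(a,b,c). (a + b + c, c, - b - c))"
proof -
  have eq: "(\<lambda>(a,b,c). (a + b + c, c, - b - c)) = rz \<circ> ry" by (auto simp: fun_eq_iff rx_def ry_def rz_def)
  show ?thesis by (subst eq) (intro Good_comp Good_rx Good_ry Good_rz)
qed
lemma Good_GL21: "Good (\<lambda>(a,b,c). (- a - b - c, c, a))"
proof -
  have eq: "(\<lambda>(a,b,c). (- a - b - c, c, a)) = rx \<circ> rz \<circ> ry" by (auto simp: fun_eq_iff rx_def ry_def rz_def)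
  show ?thesis by (subst eq) (intro Good_comp Good_rx Good_ry Good_rz)
qed
lemma Good_GL22: "Good (\<lambda>(a,b,c). (a + b + c, - c, - b))"
proof -
  have eq: "(\<lambda>(a,b,c). (a + b + c, - c, - b)) = ry \<circ> rz \<circ> ry" by (auto simp: fun_eq_iff rx_def ry_def rz_def)
  show ?thesis by (subst eq) (intro Good_comp Good_rx Good_ry Good_rz)
qed
lemma Good_GL23: "Good (\<lambda>(a,b,c). (- a - b - c, - c, a + c))"
proof -
  have eq: "(\<lambda>(a,b,c). (- a - b - c, - c, a + c)) = rx \<circ> ry \<circ> rz \<circ> ry" by (auto simp: fun_eq_iff rx_def ry_def rz_def)
  show ?thesis by (subst eq) (intro Good_comp Good_rx Good_ry Good_rz)
qed
lemma Good_GL: "\<forall>sg \<in> set GL. Good (snd sg)"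
  unfolding GL_def using Good_GL0 Good_GL1 Good_GL2 Good_GL3 Good_GL4 Good_GL5 Good_GL6 Good_GL7 Good_GL8 Good_GL9 Good_GL10 Good_GL11 Good_GL12 Good_GL13 Good_GL14 Good_GL15 Good_GL16 Good_GL17 Good_GL18 Good_GL19 Good_GL20 Good_GL21 Good_GL22 Good_GL23 by simp
lemma K2_expand_exps: fixes a b c x y z :: real
  shows "exp (-4 * (a + b + c) * (x + y + z)) = exp (-4 * a * x) * exp (-4 * a * y) * exp (-4 * a * z) * exp (-4 * b * x) * exp (-4 * b * y) * exp (-4 * b * z) * exp (-4 * c * x) * exp (-4 * c * y) * exp (-4 * c * z)"
  and "exp (-4 * a * x - 4 * b * y) = exp (-4 * a * x) * exp (-4 * b * y)"
  and "exp (-4 * c * (x + y + z)) = exp (-4 * c * x) * exp (-4 * c * y) * exp (-4 * c * z)"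
  and "exp (-4 * (a + b + c) * z) = exp (-4 * a * z) * exp (-4 * b * z) * exp (-4 * c * z)"
  and "exp (-4 * (b + c) * (x + y + z)) = exp (-4 * b * x) * exp (-4 * b * y) * exp (-4 * b * z) * exp (-4 * c * x) * exp (-4 * c * y) * exp (-4 * c * z)"
  and "exp (-4 * (a + c) * z) = exp (-4 * a * z) * exp (-4 * c * z)"
  and "exp (-4 * (a + c) * (x + y + z)) = exp (-4 * a * x) * exp (-4 * a * y) * exp (-4 * a * z) * exp (-4 * c * x) * exp (-4 * c * y) * exp (-4 * c * z)"
  and "exp (-4 * (b + c) * z) = exp (-4 * b * z) * exp (-4 * c * z)"
  and "exp (-4 * a * x - 4 * c * (x + z)) = exp (-4 * a * x) * exp (-4 * c * x) * exp (-4 * c * z)"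
  and "exp (-4 * b * (x + y + z)) = exp (-4 * b * x) * exp (-4 * b * y) * exp (-4 * b * z)"
  and "exp (-4 * b * y - 4 * c * (y + z)) = exp (-4 * b * y) * exp (-4 * c * y) * exp (-4 * c * z)"
  and "exp (-4 * a * (x + y + z)) = exp (-4 * a * x) * exp (-4 * a * y) * exp (-4 * a * z)"
  and "exp (-4 * c * (x + z)) = exp (-4 * c * x) * exp (-4 * c * z)"
  and "exp (-4 * c * (y + z)) = exp (-4 * c * y) * exp (-4 * c * z)"
  by (simp_all only: mult_exp_exp, (rule arg_cong[where f=exp], algebra)+)
lemma Wg1: "W ((- y - z) - a) ((- x - z) - b) ((z) - c) = W (x - a) (y - b) (z - c) * (exp (-4 * a * x) * exp (-4 * a * y) * exp (-4 * a * z) * exp (-4 * b * x) * exp (-4 * b * y) * exp (-4 * b * z) * exp (-4 * c * x) * exp (-4 * c * y) * exp (-4 * c * z))"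
  unfolding W_def by (simp only: mult_exp_exp, rule arg_cong[where f=exp], algebra)
lemma Wg2: "W ((x + z) - a) ((y + z) - b) ((- z) - c) = W (x - a) (y - b) (z - c) * (exp (-4 * c * z))"
  unfolding W_def by (simp only: mult_exp_exp, rule arg_cong[where f=exp], algebra)
lemma Wg3: "W ((- y) - a) ((- x) - b) ((- z) - c) = W (x - a) (y - b) (z - c) * (exp (-4 * a * x) * exp (-4 * a * y) * exp (-4 * a * z) * exp (-4 * b * x) * exp (-4 * b * y) * exp (-4 * b * z) * exp (-4 * c * x) * exp (-4 * c * y) * exp (-4 * c * z) * exp (-4 * c * z))"
  unfolding W_def by (simp only: mult_exp_exp, rule arg_cong[where f=exp], algebra)
lemma Wg4: "W ((- x) - a) ((- y) - b) ((x + y + z) - c) = W (x - a) (y - b) (z - c) * (exp (-4 * a * x) * exp (-4 * b * y))"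
  unfolding W_def by (simp only: mult_exp_exp, rule arg_cong[where f=exp], algebra)
lemma Wg5: "W ((y + z) - a) ((x + z) - b) ((- x - y - z) - c) = W (x - a) (y - b) (z - c) * (exp (-4 * a * x) * exp (-4 * b * y) * exp (-4 * c * x) * exp (-4 * c * y) * exp (-4 * c * z))"
  unfolding W_def by (simp only: mult_exp_exp, rule arg_cong[where f=exp], algebra)
lemma Wg6: "W ((- x - z) - a) ((- y - z) - b) ((x + y + z) - c) = W (x - a) (y - b) (z - c) * (exp (-4 * a * x) * exp (-4 * a * z) * exp (-4 * b * y) * exp (-4 * b * z) * exp (-4 * c * z))"
  unfolding W_def by (simp only: mult_exp_exp, rule arg_cong[where f=exp], algebra)
lemma Wg7: "W ((y) - a) ((x) - b) ((- x - y - z) - c) = W (x - a) (y - b) (z - c) * (exp (-4 * a * x) * exp (-4 * a * z) * exp (-4 * b * y) * exp (-4 * b * z) * exp (-4 * c * x) * exp (-4 * c * y) * exp (-4 * c * z) * exp (-4 * c * z))"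
  unfolding W_def by (simp only: mult_exp_exp, rule arg_cong[where f=exp], algebra)
lemma Wg8: "W ((- x) - a) ((y) - b) ((x + z) - c) = W (x - a) (y - b) (z - c) * (exp (-4 * a * x))"
  unfolding W_def by (simp only: mult_exp_exp, rule arg_cong[where f=exp], algebra)
lemma Wg9: "W ((y + z) - a) ((- x - z) - b) ((- y) - c) = W (x - a) (y - b) (z - c) * (exp (-4 * a * x) * exp (-4 * b * x) * exp (-4 * b * y) * exp (-4 * b * z) * exp (-4 * c * x) * exp (-4 * c * y) * exp (-4 * c * z))"
  unfolding W_def by (simp only: mult_exp_exp, rule arg_cong[where f=exp], algebra)
lemma Wg10: "W ((- x - z) - a) ((y + z) - b) ((x) - c) = W (x - a) (y - b) (z - c) * (exp (-4 * a * x) * exp (-4 * a * z) * exp (-4 * c * z))"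
  unfolding W_def by (simp only: mult_exp_exp, rule arg_cong[where f=exp], algebra)
lemma Wg11: "W ((y) - a) ((- x) - b) ((- y - z) - c) = W (x - a) (y - b) (z - c) * (exp (-4 * a * x) * exp (-4 * a * z) * exp (-4 * b * x) * exp (-4 * b * y) * exp (-4 * b * z) * exp (-4 * c * x) * exp (-4 * c * y) * exp (-4 * c * z) * exp (-4 * c * z))"
  unfolding W_def by (simp only: mult_exp_exp, rule arg_cong[where f=exp], algebra)
lemma Wg12: "W ((x) - a) ((- y) - b) ((y + z) - c) = W (x - a) (y - b) (z - c) * (exp (-4 * b * y))"
  unfolding W_def by (simp only: mult_exp_exp, rule arg_cong[where f=exp], algebra)
lemma Wg13: "W ((- y - z) - a) ((x + z) - b) ((- x) - c) = W (x - a) (y - b) (z - c) * (exp (-4 * a * x) * exp (-4 * a * y) * exp (-4 * a * z) * exp (-4 * b * y) * exp (-4 * c * x) * exp (-4 * c * y) * exp (-4 * c * z))"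
  unfolding W_def by (simp only: mult_exp_exp, rule arg_cong[where f=exp], algebra)
lemma Wg14: "W ((x + z) - a) ((- y - z) - b) ((y) - c) = W (x - a) (y - b) (z - c) * (exp (-4 * b * y) * exp (-4 * b * z) * exp (-4 * c * z))"
  unfolding W_def by (simp only: mult_exp_exp, rule arg_cong[where f=exp], algebra)
lemma Wg15: "W ((- y) - a) ((x) - b) ((- x - z) - c) = W (x - a) (y - b) (z - c) * (exp (-4 * a * x) * exp (-4 * a * y) * exp (-4 * a * z) * exp (-4 * b * y) * exp (-4 * b * z) * exp (-4 * c * x) * exp (-4 * c * y) * exp (-4 * c * z) * exp (-4 * c * z))"
  unfolding W_def by (simp only: mult_exp_exp, rule arg_cong[where f=exp], algebra)
lemma Wg16: "W ((z) - a) ((x + y + z) - b) ((- x - z) - c) = W (x - a) (y - b) (z - c) * (exp (-4 * a * x) * exp (-4 * c * x) * exp (-4 * c * z))"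
  unfolding W_def by (simp only: mult_exp_exp, rule arg_cong[where f=exp], algebra)
lemma Wg17: "W ((z) - a) ((- x - y - z) - b) ((y) - c) = W (x - a) (y - b) (z - c) * (exp (-4 * a * x) * exp (-4 * b * x) * exp (-4 * b * y) * exp (-4 * b * z) * exp (-4 * c * x) * exp (-4 * c * z))"
  unfolding W_def by (simp only: mult_exp_exp, rule arg_cong[where f=exp], algebra)
lemma Wg18: "W ((- z) - a) ((x + y + z) - b) ((- x) - c) = W (x - a) (y - b) (z - c) * (exp (-4 * a * x) * exp (-4 * a * z) * exp (-4 * c * x) * exp (-4 * c * z))"
  unfolding W_def by (simp only: mult_exp_exp, rule arg_cong[where f=exp], algebra)
lemma Wg19: "W ((- z) - a) ((- x - y - z) - b) ((y + z) - c) = W (x - a) (y - b) (z - c) * (exp (-4 * a * x) * exp (-4 * a * z) * exp (-4 * b * x) * exp (-4 * b * y) * exp (-4 * b * z) * exp (-4 * c * x) * exp (-4 * c * z))"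
  unfolding W_def by (simp only: mult_exp_exp, rule arg_cong[where f=exp], algebra)
lemma Wg20: "W ((x + y + z) - a) ((z) - b) ((- y - z) - c) = W (x - a) (y - b) (z - c) * (exp (-4 * b * y) * exp (-4 * c * y) * exp (-4 * c * z))"
  unfolding W_def by (simp only: mult_exp_exp, rule arg_cong[where f=exp], algebra)
lemma Wg21: "W ((- x - y - z) - a) ((z) - b) ((x) - c) = W (x - a) (y - b) (z - c) * (exp (-4 * a * x) * exp (-4 * a * y) * exp (-4 * a * z) * exp (-4 * b * y) * exp (-4 * c * y) * exp (-4 * c * z))"
  unfolding W_def by (simp only: mult_exp_exp, rule arg_cong[where f=exp], algebra)
lemma Wg22: "W ((x + y + z) - a) ((- z) - b) ((- y) - c) = W (x - a) (y - b) (z - c) * (exp (-4 * b * y) * exp (-4 * b * z) * exp (-4 * c * y) * exp (-4 * c * z))"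
  unfolding W_def by (simp only: mult_exp_exp, rule arg_cong[where f=exp], algebra)
lemma Wg23: "W ((- x - y - z) - a) ((- z) - b) ((x + z) - c) = W (x - a) (y - b) (z - c) * (exp (-4 * a * x) * exp (-4 * a * y) * exp (-4 * a * z) * exp (-4 * b * y) * exp (-4 * b * z) * exp (-4 * c * y) * exp (-4 * c * z))"
  unfolding W_def by (simp only: mult_exp_exp, rule arg_cong[where f=exp], algebra)


lemma phi_diff: "phi ((a1, b1, c1) - (a, b, c)) = W (a1 - a) (b1 - b) (c1 - c)"
  by (simp add: phi_def)

lemma ind_Oct: "indicator Oct (u, v, w) = (if 0 \<le> u \<and> 0 \<le> v \<and> 0 \<le> w then 1 else (0::real))"
  by (simp add: Oct_def indicator_def)

lemma Gid2: fixes a b c :: real shows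
  "(\<Sum>(s,g)\<leftarrow>GL. s * indicator Oct (g (a,b,c))) = sgn a * sgn b + sgn c * sgn (a + b + c) - sgn (a + c) * sgn (b + c)"
  unfolding GL_def
  apply (simp only: list.map sum_list.Cons sum_list.Nil prod.case ind_Oct)
  apply (cases a "0::real" rule: linorder_cases; cases b "0::real" rule: linorder_cases;
         cases c "0::real" rule: linorder_cases; cases "a+c" "0::real" rule: linorder_cases;
         cases "b+c" "0::real" rule: linorder_cases; cases "a+b+c" "0::real" rule: linorder_cases)
  by (simp_all add: sgn_if)


lemma A0: fixes a b c x y z :: real shows
  "phi ((x,y,z) - (a,b,c)) * K2 a b c x y z = (\<Sum>(s,g)\<leftarrow>GL. s * phi (g (x,y,z) - (a,b,c)))"
  unfolding GL_def
  apply (simp only: list.map sum_list.Cons sum_list.Nil prod.case phi_diff)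
  unfolding K2_def K2_expand_exps
  apply (simp only: Wg1 Wg2 Wg3 Wg4 Wg5 Wg6 Wg7 Wg8 Wg9 Wg10 Wg11 Wg12 Wg13 Wg14 Wg15 Wg16 Wg17 Wg18 Wg19 Wg20 Wg21 Wg22 Wg23)
  by algebra

lemma sl_mult: "(\<Sum>(s,g)\<leftarrow>L. s * (c * f g)) = (c::real) * (\<Sum>(s,g)\<leftarrow>L. s * f g)"
  by (induct L) (auto simp: algebra_simps)

lemma sl_cong: "(\<And>sg. sg \<in> set L \<Longrightarrow> P (snd sg) = Q (snd sg)) \<Longrightarrow>
    (\<Sum>(s,g)\<leftarrow>L. s * P g) = (\<Sum>(s,g)\<leftarrow>L. (s::real) * Q g)"
  by (intro arg_cong[where f=sum_list] map_cong refl) (auto simp: split_beta)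

lemma int_sl:
  fixes F :: "'b \<Rightarrow> 'a \<Rightarrow> real"
  shows "(\<And>sg. sg \<in> set L \<Longrightarrow> integrable M (F (snd sg))) \<Longrightarrow>
    (\<integral>p. (\<Sum>(s,g)\<leftarrow>L. s * F g p) \<partial>M) = (\<Sum>(s,g)\<leftarrow>L. s * (\<integral>p. F g p \<partial>M))"
proof (induct L)
  case Nil then show ?case by simp
next
  case (Cons sg L)
  obtain s g where sg: "sg = (s,g)" by (cases sg)
  have i1: "integrable M (F g)" using Cons(2)[of sg] by (simp add: sg)
  have i2: "integrable M (\<lambda>p. \<Sum>(s,g)\<leftarrow>L. s * F g p)"
    using Cons(2) proof (induct L)
    case Nil then show ?case by simp
  next
    case (Cons sg' L')
    obtain s' g' where sg': "sg' = (s',g')" by (cases sg')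
    have "integrable M (F g')" using Cons(2)[of sg'] by (simp add: sg')
    moreover have "integrable M (\<lambda>p. \<Sum>(s,g)\<leftarrow>L'. s * F g p)" using Cons by auto
    ultimately show ?case by (simp add: sg')
  qed
  have "(\<integral>p. (\<Sum>(s,g)\<leftarrow>sg # L. s * F g p) \<partial>M) = (\<integral>p. s * F g p + (\<Sum>(s,g)\<leftarrow>L. s * F g p) \<partial>M)"
    by (simp add: sg)
  also have "\<dots> = s * (\<integral>p. F g p \<partial>M) + (\<integral>p. (\<Sum>(s,g)\<leftarrow>L. s * F g p) \<partial>M)"
    using i1 i2 by simp
  also have "(\<integral>p. (\<Sum>(s,g)\<leftarrow>L. s * F g p) \<partial>M) = (\<Sum>(s,g)\<leftarrow>L. s * (\<integral>p. F g p \<partial>M))"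
    using Cons by auto
  finally show ?case by (simp add: sg)
qed

lemma int_ind_phi: "integrable lborel (\<lambda>p. indicator Oct p * phi (w - p))"
  using integrable_mult_indicator[OF Oct_meas[unfolded sets_lborel[symmetric]] int_phi[of w]] by simp

lemma int_ind_g_phi:
  assumes "Good g" shows "integrable lborel (\<lambda>q. indicator Oct (g q) * phi (X - q))"
proof (rule Bochner_Integration.integrable_bound[OF int_phi[of X]])
  have [measurable]: "g \<in> borel_measurable borel" using assms by (simp add: Good_def nnpres_def)
  show "(\<lambda>q. indicator Oct (g q) * phi (X - q)) \<in> borel_measurable lborel" by measurable
  show "AE q in lborel. norm (indicator Oct (g q) * phi (X - q)) \<le> norm (phi (X - q))"
    by (auto simp: phi_pos split: split_indicator)
qed

definition CC :: real where "CC = sqrt pi * sqrt pi * sqrt (pi / 2)"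

lemma int_phi_sgn: "integrable lborel (\<lambda>q. phi (X - q) * (sgn (u q) * sgn (v q)))"
  if [measurable]: "u \<in> borel_measurable borel" "v \<in> borel_measurable borel"
proof (rule Bochner_Integration.integrable_bound[OF int_phi[of X]])
  show "(\<lambda>q. phi (X - q) * (sgn (u q) * sgn (v q))) \<in> borel_measurable lborel" by measurable
  show "AE q in lborel. norm (phi (X - q) * (sgn (u q) * sgn (v q))) \<le> norm (phi (X - q))"
    by (auto simp: abs_mult sgn_if phi_pos)
qed

lemma baseg:
  assumes "Good h"
  shows "(\<integral>q. phi (X - q) * (sgn (fst (h q)) * sgn (fst (snd (h q)))) \<partial>lborel)
     = CC * erf (fst (h X)) * erf (fst (snd (h X)))"
proof -
  have np: "nnpres h" and lin: "\<And>u v. h (u - v) = h u - h v" and ph: "\<And>v. phi (h v) = phi v"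
    using assms by (auto simp: Good_def)
  have "(\<integral>q. phi (X - q) * (sgn (fst (h q)) * sgn (fst (snd (h q)))) \<partial>lborel)
      = (\<integral>q. (\<lambda>p. phi (h X - p) * (sgn (fst p) * sgn (fst (snd p)))) (h q) \<partial>lborel)"
    by (simp add: lin[symmetric] ph)
  also have "\<dots> = (\<integral>p. phi (h X - p) * (sgn (fst p) * sgn (fst (snd p))) \<partial>lborel)"
    by (rule nnpres_integral[OF np]) measurable
  also have "\<dots> = CC * erf (fst (h X)) * erf (fst (snd (h X)))"
    by (simp add: base CC_def)
  finally show ?thesis .
qed

lemma main2:
  fixes x y z :: real
  shows "sqrt 2 / pi powr (3/2) *
              (LINT p : {0..} \<times> {0..} \<times> {0..} | lborel.
                 W (x - fst p) (y - fst (snd p)) (z - snd (snd p)) *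
                 K2 (fst p) (fst (snd p)) (snd (snd p)) x y z)
            = erf x * erf y + erf z * erf (x + y + z) - erf (x + z) * erf (y + z)"
proof -
  define X where "X = (x,y,z)"
  have "(LINT p : {0..} \<times> {0..} \<times> {0..} | lborel.
                 W (x - fst p) (y - fst (snd p)) (z - snd (snd p)) *
                 K2 (fst p) (fst (snd p)) (snd (snd p)) x y z)
      = (\<integral>p. (\<Sum>(s,g)\<leftarrow>GL. s * (indicator Oct p * phi (g X - p))) \<partial>lborel)"
    unfolding set_lebesgue_integral_def
  proof (intro Bochner_Integration.integral_cong refl)
    fix p :: "real \<times> real \<times> real"
    obtain a b c where p: "p = (a,b,c)" by (cases p) auto
    have "W (x - a) (y - b) (z - c) * K2 a b c x y z = (\<Sum>(s,g)\<leftarrow>GL. s * phi (g X - p))"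
      using A0[of x y z a b c] by (simp add: X_def p phi_def)
    then show "indicator ({0..} \<times> {0..} \<times> {0..}) p *\<^sub>R
        (W (x - fst p) (y - fst (snd p)) (z - snd (snd p)) * K2 (fst p) (fst (snd p)) (snd (snd p)) x y z)
        = (\<Sum>(s,g)\<leftarrow>GL. s * (indicator Oct p * phi (g X - p)))"
      by (simp add: p sl_mult Oct_def)
  qed
  also have "\<dots> = (\<Sum>(s,g)\<leftarrow>GL. s * (\<integral>p. indicator Oct p * phi (g X - p) \<partial>lborel))"
    by (rule int_sl) (simp add: int_ind_phi)
  also have "\<dots> = (\<Sum>(s,g)\<leftarrow>GL. s * (\<integral>q. indicator Oct (g q) * phi (X - q) \<partial>lborel))"
    by (rule sl_cong) (use Good_GL cov in blast)
  also have "\<dots> = (\<integral>q. (\<Sum>(s,g)\<leftarrow>GL. s * (indicator Oct (g q) * phi (X - q))) \<partial>lborel)"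
    by (rule int_sl[symmetric]) (use Good_GL int_ind_g_phi in blast)
  also have "\<dots> = (\<integral>q. phi (X - q) * (sgn (fst q) * sgn (fst (snd q)))
        + phi (X - q) * (sgn (snd (snd q)) * sgn (fst q + fst (snd q) + snd (snd q)))
        - phi (X - q) * (sgn (fst q + snd (snd q)) * sgn (fst (snd q) + snd (snd q))) \<partial>lborel)"
  proof (intro Bochner_Integration.integral_cong refl)
    fix q :: "real \<times> real \<times> real"
    obtain a b c where q: "q = (a,b,c)" by (cases q) auto
    have "(\<Sum>(s,g)\<leftarrow>GL. s * (indicator Oct (g q) * phi (X - q)))
        = (\<Sum>(s,g)\<leftarrow>GL. s * (phi (X - q) * indicator Oct (g q)))" by (simp add: mult.commute)
    also have "\<dots> = phi (X - q) * (\<Sum>(s,g)\<leftarrow>GL. s * indicator Oct (g q))" by (rule sl_mult)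
    also have "\<dots> = phi (X - q) * (sgn a * sgn b + sgn c * sgn (a + b + c) - sgn (a + c) * sgn (b + c))"
      by (simp only: q Gid2)
    finally show "(\<Sum>(s,g)\<leftarrow>GL. s * (indicator Oct (g q) * phi (X - q))) =
        phi (X - q) * (sgn (fst q) * sgn (fst (snd q)))
        + phi (X - q) * (sgn (snd (snd q)) * sgn (fst q + fst (snd q) + snd (snd q)))
        - phi (X - q) * (sgn (fst q + snd (snd q)) * sgn (fst (snd q) + snd (snd q)))"
      by (simp add: q algebra_simps)
  qed
  also have "\<dots> = (\<integral>q. phi (X - q) * (sgn (fst q) * sgn (fst (snd q))) \<partial>lborel)
        + (\<integral>q. phi (X - q) * (sgn (snd (snd q)) * sgn (fst q + fst (snd q) + snd (snd q))) \<partial>lborel)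
        - (\<integral>q. phi (X - q) * (sgn (fst q + snd (snd q)) * sgn (fst (snd q) + snd (snd q))) \<partial>lborel)"
    by (subst Bochner_Integration.integral_diff, (intro Bochner_Integration.integrable_add int_phi_sgn; measurable),
        (intro int_phi_sgn; measurable), subst Bochner_Integration.integral_add, (intro int_phi_sgn; measurable)+, simp)
  also have "(\<integral>q. phi (X - q) * (sgn (fst q) * sgn (fst (snd q))) \<partial>lborel) = CC * erf x * erf y"
    by (simp add: base CC_def X_def)
  also have "(\<integral>q. phi (X - q) * (sgn (snd (snd q)) * sgn (fst q + fst (snd q) + snd (snd q))) \<partial>lborel)
      = CC * erf z * erf (x + y + z)"
  proof -
    have "(\<integral>q. phi (X - q) * (sgn (snd (snd q)) * sgn (fst q + fst (snd q) + snd (snd q))) \<partial>lborel)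
        = (\<integral>q. phi (X - q) * (sgn (fst ((rz \<circ> rx) q)) * sgn (fst (snd ((rz \<circ> rx) q)))) \<partial>lborel)"
      by (intro Bochner_Integration.integral_cong refl) (auto simp: rx_def rz_def split_beta algebra_simps)
    also have "\<dots> = CC * erf z * erf (x + y + z)"
      by (subst baseg[OF Good_comp[OF Good_rz Good_rx]]) (simp add: X_def rx_def rz_def algebra_simps)
    finally show ?thesis .
  qed
  also have "(\<integral>q. phi (X - q) * (sgn (fst q + snd (snd q)) * sgn (fst (snd q) + snd (snd q))) \<partial>lborel)
      = CC * erf (x + z) * erf (y + z)"
  proof -
    have "(\<integral>q. phi (X - q) * (sgn (fst q + snd (snd q)) * sgn (fst (snd q) + snd (snd q))) \<partial>lborel)
        = (\<integral>q. phi (X - q) * (sgn (fst (rz q)) * sgn (fst (snd (rz q)))) \<partial>lborel)"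
      by (intro Bochner_Integration.integral_cong refl) (auto simp: rz_def split_beta)
    also have "\<dots> = CC * erf (x + z) * erf (y + z)"
      by (subst baseg[OF Good_rz]) (simp add: X_def rz_def)
    finally show ?thesis .
  qed
  finally have I: "(LINT p : {0..} \<times> {0..} \<times> {0..} | lborel.
                 W (x - fst p) (y - fst (snd p)) (z - snd (snd p)) *
                 K2 (fst p) (fst (snd p)) (snd (snd p)) x y z)
      = CC * (erf x * erf y + erf z * erf (x + y + z) - erf (x + z) * erf (y + z))"
    by (simp add: algebra_simps)
  have CC: "sqrt 2 / pi powr (3/2) * CC = 1"
  proof -
    have "pi powr (3/2) = pi powr (1 + 1/2)" by simp
    also have "\<dots> = pi powr 1 * pi powr (1/2)" by (rule powr_add)
    also have "\<dots> = pi * sqrt pi" by (simp add: powr_half_sqrt)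
    finally have "pi powr (3/2) = pi * sqrt pi" .
    then show ?thesis
      by (simp add: CC_def real_sqrt_divide field_simps)
  qed
  show ?thesis unfolding I by (subst mult.assoc[symmetric], subst CC, simp)
qed


lemma K2_zero: fixes a b c z :: real shows "K2 a b c 0 0 z = 0"
  unfolding K2_def K2_expand_exps by simp algebra

lemma K2_dx: fixes a b c z :: real shows "((\<lambda>x. K2 a b c x 0 z) has_real_derivative 0) (at 0)"
  unfolding K2_def K2_expand_exps
  apply (rule derivative_eq_intros refl)+
  apply simp
  apply algebra
  done

lemma K2_dy: fixes a b c z :: real shows "((\<lambda>y. K2 a b c 0 y z) has_real_derivative 0) (at 0)"
  unfolding K2_def K2_expand_exps
  apply (rule derivative_eq_intros refl)+
  apply simp
  apply algebra
  done


theorem mainTheorem8: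
  shows "(\<forall>x' y' z' z. x' \<ge> 0 \<longrightarrow> y' \<ge> 0 \<longrightarrow> z' \<ge> 0 \<longrightarrow> z \<ge> 0 \<longrightarrow>
            K2 x' y' z' 0 0 z = 0
          \<and> ((\<lambda>x. K2 x' y' z' x 0 z) has_real_derivative 0) (at 0)
          \<and> ((\<lambda>y. K2 x' y' z' 0 y z) has_real_derivative 0) (at 0))
       \<and> (\<forall>x y z. x \<ge> 0 \<longrightarrow> y \<ge> 0 \<longrightarrow> z \<ge> 0 \<longrightarrow>
            sqrt 2 / pi powr (3/2) *
              (LINT p : {0..} \<times> {0..} \<times> {0..} | lborel.
                 W (x - fst p) (y - fst (snd p)) (z - snd (snd p)) *
                 K2 (fst p) (fst (snd p)) (snd (snd p)) x y z)
            = erf x * erf y + erf z * erf (x + y + z) - erf (x + z) * erf (y + z))"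
  using K2_zero K2_dx K2_dy main2 by blast

end
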